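(* There exist an environment $E$ and a total preorder $\succeq$ on $\Pi^E$ such that $\succeq\in\mathrm{Ord}_{\mathrm{RM}}(E)\cap\mathrm{Ord}_{\mathrm{ONMR}}(E)\cap\mathrm{Ord}_{\mathrm{LTL}}(E)$ but $\succeq\notin\mathrm{Ord}_{\mathrm{MR}}(E)\cup\mathrm{Ord}_{\mathrm{RRL}}(E)$.
   Context: An environment is a tuple $E=(\mathcal S,\mathcal A,\mathcal T,\mathcal I)$ where $\mathcal S,\mathcal A$ are finite nonempty sets, $\mathcal T:\mathcal S\times\mathcal A\to\Delta(\mathcal S)$ and $\mathcal I\in\Delta(\mathcal S)$. A policy is a map $\pi:\mathcal S\to\Delta(\mathcal A)$ (stationary, possibly stochastic); $\Pi^E$ denotes the set of all policies. A trajectory $\xi=(s_0,a_0,s_1,a_1,\dots)\in\Xi:=\mathcal S\times(\mathcal A\times\mathcal S)^\omega$ is generated under $\pi$ by $s_0\sim\mathcal I$, $a_t\sim\pi(s_t)$, $s_{t+1}\sim\mathcal T(s_t,a_t)$; $\mathbb E^\pi_\xi$ denotes expectation under this distribution. An objective-specification formalism $X$ assigns to each environment $E$ a set of objective specifications, each inducing a total preorder $\succeq$ on $\Pi^E$; $\mathrm{Ord}_X(E)$ is the set of total preorders so induced. A specification defining a scalar $J:\Pi^E\to\mathbb R$ induces $\pi_1\succeq\pi_2\iff J(\pi_1)\ge J(\pi_2)$. MR: specification $(\mathcal R,\gamma)$, $\mathcal R:\mathcal S\times\mathcal A\times\mathcal S\to\mathbb R$, $\gamma\in[0,1)$, $J(\pi)=\mathbb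 E^\pi_\xi[\sum_{t=0}^\infty\gamma^t\mathcal R(s_t,a_t,s_{t+1})]$. RRL: specification $(\mathcal R,\alpha,F,\gamma)$ with $\mathcal R:\mathcal S\times\mathcal A\times\mathcal S\to\mathbb R$, $\alpha\in\mathbb R$, $F:\Delta(\mathcal A)\to\mathbb R$, $\gamma\in[0,1)$; $J(\pi)=\mathbb E^\pi_\xi[\sum_{t=0}^\infty\gamma^t(\mathcal R(s_t,a_t,s_{t+1})-\alpha F(\pi(s_t)))]$. ONMR: specification $(\mathcal R,f,\gamma)$ with $\mathcal R:\mathcal S\times\mathcal A\times\mathcal S\to\mathbb R$, $f:\mathbb R\to\mathbb R$, $\gamma\in[0,1)$; $J(\pi)=f\big(\mathbb E^\pi_\xi[\sum_{t=0}^\infty\gamma^t\mathcal R(s_t,a_t,s_{t+1})]\big)$. RM (reward machines): specification $(U,u_0,\delta_U,\delta_{\mathcal R},\gamma)$ with $U$ a finite set, $u_0\in U$, $\delta_U:U\times\mathcal S\times\mathcal A\times\mathcal S\to U$, $\delta_{\mathcal R}:U\times U\to(\mathcal S\times\mathcal A\times\mathcal S\to\mathbb R)$, $\gamma\in[0,1)$; along a trajectory $u_{t+1}=\delta_U(u_t,s_t,a_t,s_{t+1})$ and $J(\pi)=\mathbb E^\pi_\xi[\sum_{t=0}^\infty\gamma^t\,\delta_{\mathcal R}(u_t,u_{t+1})(s_t,a_t,s_{t+1})]$. LTL: specification $(\varphi)$ with $\varphi$ a linear temporal logic formula whose atomic propositions are the transitions $(s,a,s')\in\mathcal S\times\mathcal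 A\times\mathcal S$, built with $\neg,\lor,\land,\to$ and the temporal operators $\bigcirc$ (next), $\square$ (always), $\lozenge$ (eventually), $\mathcal U$ (until). Semantics on a trajectory $\xi$ at time $t$: an atomic proposition $(s,a,s')$ holds iff $(s_t,a_t,s_{t+1})=(s,a,s')$; $\bigcirc\psi$ holds iff $\psi$ holds at $t+1$; $\square\psi$ iff $\psi$ holds at every $t'\ge t$; $\lozenge\psi$ iff $\psi$ holds at some $t'\ge t$; $\psi\,\mathcal U\,\chi$ iff there is $t'\ge t$ with $\chi$ holding at $t'$ and $\psi$ holding at every $t''$ with $t\le t''<t'$; Boolean connectives as usual. $\varphi(\xi)=1$ if $\varphi$ holds at time $0$ and $0$ otherwise; $J(\pi)=\mathbb E^\pi_\xi[\varphi(\xi)]$. *)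

theory Defs
  imports "HOL-Probability.Probability"
begin

section \<open>Environments (finite carriers encoded inside nat)\<close>

record env =
  St :: "nat set"
  Ac :: "nat set"
  Tr :: "nat \<Rightarrow> nat \<Rightarrow> nat pmf"
  In :: "nat pmf"

definition valid_env :: "env \<Rightarrow> bool" where
  "valid_env E \<longleftrightarrow> finite (St E) \<and> St E \<noteq> {} \<and> finite (Ac E) \<and> Ac E \<noteq> {}
     \<and> (\<forall>s\<in>St E. \<forall>a\<in>Ac E. set_pmf (Tr E s a) \<subseteq> St E)
     \<and> set_pmf (In E) \<subseteq> St E"

type_synonym policy = "nat \<Rightarrow> nat pmf"

definition Pol :: "env \<Rightarrow> policy set" where
  "Pol E = {\<pi>. \<forall>s\<in>St E. set_pmf (\<pi> s) \<subseteq> Ac E}"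

text \<open>A trajectory (s0,a0,s1,a1,...) is encoded as the stream of pairs (s_t,a_t).\<close>
type_synonym traj = "(nat \<times> nat) stream"

definition st :: "traj \<Rightarrow> nat \<Rightarrow> nat" where "st \<omega> t = fst (\<omega> !! t)"
definition ac :: "traj \<Rightarrow> nat \<Rightarrow> nat" where "ac \<omega> t = snd (\<omega> !! t)"

text \<open>Probability of a finite prefix [(s0,a0),...,(s_{n-1},a_{n-1})], with d the
  distribution of the first state of the prefix.\<close>
fun pref_prob :: "policy \<Rightarrow> (nat \<Rightarrow> nat \<Rightarrow> nat pmf) \<Rightarrow> nat pmf \<Rightarrow> (nat \<times> nat) list \<Rightarrow> real" where
  "pref_prob \<pi> T d [] = 1"
| "pref_prob \<pi> T d ((s, a) # xs) = pmf d s * pmf (\<pi> s) a * pref_prob \<pi> T (T s a) xs"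

text \<open>The trajectory distribution under policy pi: the (unique, by Ionescu-Tulcea / pi-lambda)
  probability measure on trajectory space whose finite-dimensional marginals are given by
  s0 ~ I, a_t ~ pi(s_t), s_{t+1} ~ T(s_t,a_t).\<close>
definition traj_meas :: "env \<Rightarrow> policy \<Rightarrow> traj measure" where
  "traj_meas E \<pi> = (SOME M. prob_space M
      \<and> sets M = sets (stream_space (count_space UNIV))
      \<and> (\<forall>xs. emeasure M {\<omega> \<in> space M. stake (length xs) \<omega> = xs}
               = ennreal (pref_prob \<pi> (Tr E) (In E) xs)))"

definition rew_in :: "env \<Rightarrow> (nat \<Rightarrow> nat \<Rightarrow> nat \<Rightarrow> real) \<Rightarrow> nat \<Rightarrow> nat \<Rightarrow> nat \<Rightarrow> real" where
  "rew_in E R s a s' = (if s \<in> St E \<and> a \<in> Ac E \<and> s' \<in> St E then R s a s' else 0)"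

definition J_MR :: "env \<Rightarrow> (nat \<Rightarrow> nat \<Rightarrow> nat \<Rightarrow> real) \<Rightarrow> real \<Rightarrow> policy \<Rightarrow> real" where
  "J_MR E R \<gamma> \<pi> = (\<integral>\<omega>. (\<Sum>t. \<gamma> ^ t * rew_in E R (st \<omega> t) (ac \<omega> t) (st \<omega> (Suc t))) \<partial>traj_meas E \<pi>)"

definition J_RRL :: "env \<Rightarrow> (nat \<Rightarrow> nat \<Rightarrow> nat \<Rightarrow> real) \<Rightarrow> real \<Rightarrow> (nat pmf \<Rightarrow> real) \<Rightarrow> real
                     \<Rightarrow> policy \<Rightarrow> real" where
  "J_RRL E R \<alpha> F \<gamma> \<pi> = (\<integral>\<omega>. (\<Sum>t. \<gamma> ^ t * (rew_in E R (st \<omega> t) (ac \<omega> t) (st \<omega> (Suc t))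
        - \<alpha> * (if st \<omega> t \<in> St E then F (\<pi> (st \<omega> t)) else 0))) \<partial>traj_meas E \<pi>)"

definition J_ONMR :: "env \<Rightarrow> (nat \<Rightarrow> nat \<Rightarrow> nat \<Rightarrow> real) \<Rightarrow> (real \<Rightarrow> real) \<Rightarrow> real \<Rightarrow> policy \<Rightarrow> real" where
  "J_ONMR E R f \<gamma> \<pi> = f (J_MR E R \<gamma> \<pi>)"

fun rm_state :: "nat \<Rightarrow> (nat \<Rightarrow> nat \<Rightarrow> nat \<Rightarrow> nat \<Rightarrow> nat) \<Rightarrow> traj \<Rightarrow> nat \<Rightarrow> nat" where
  "rm_state u0 dU \<omega> 0 = u0"
| "rm_state u0 dU \<omega> (Suc t) = dU (rm_state u0 dU \<omega> t) (st \<omega> t) (ac \<omega> t) (st \<omega> (Suc t))"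

definition J_RM :: "env \<Rightarrow> nat \<Rightarrow> (nat \<Rightarrow> nat \<Rightarrow> nat \<Rightarrow> nat \<Rightarrow> nat)
     \<Rightarrow> (nat \<Rightarrow> nat \<Rightarrow> (nat \<Rightarrow> nat \<Rightarrow> nat \<Rightarrow> real)) \<Rightarrow> real \<Rightarrow> policy \<Rightarrow> real" where
  "J_RM E u0 dU dR \<gamma> \<pi> = (\<integral>\<omega>. (\<Sum>t. \<gamma> ^ t *
       rew_in E (dR (rm_state u0 dU \<omega> t) (rm_state u0 dU \<omega> (Suc t))) (st \<omega> t) (ac \<omega> t) (st \<omega> (Suc t)))
     \<partial>traj_meas E \<pi>)"

datatype 'p ltlf =
    Atom 'p
  | NotF "'p ltlf"
  | OrF "'p ltlf" "'p ltlf"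
  | AndF "'p ltlf" "'p ltlf"
  | ImpF "'p ltlf" "'p ltlf"
  | NextF "'p ltlf"
  | AlwaysF "'p ltlf"
  | EventuallyF "'p ltlf"
  | UntilF "'p ltlf" "'p ltlf"

fun holds :: "(nat \<times> nat \<times> nat) ltlf \<Rightarrow> traj \<Rightarrow> nat \<Rightarrow> bool" where
  "holds (Atom p) \<omega> t \<longleftrightarrow> (st \<omega> t, ac \<omega> t, st \<omega> (Suc t)) = p"
| "holds (NotF \<phi>) \<omega> t \<longleftrightarrow> \<not> holds \<phi> \<omega> t"
| "holds (OrF \<phi> \<psi>) \<omega> t \<longleftrightarrow> holds \<phi> \<omega> t \<or> holds \<psi> \<omega> t"
| "holds (AndF \<phi> \<psi>) \<omega> t \<longleftrightarrow> holds \<phi> \<omega> t \<and> holds \<psi> \<omega> t"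
| "holds (ImpF \<phi> \<psi>) \<omega> t \<longleftrightarrow> (holds \<phi> \<omega> t \<longrightarrow> holds \<psi> \<omega> t)"
| "holds (NextF \<phi>) \<omega> t \<longleftrightarrow> holds \<phi> \<omega> (Suc t)"
| "holds (AlwaysF \<phi>) \<omega> t \<longleftrightarrow> (\<forall>t'\<ge>t. holds \<phi> \<omega> t')"
| "holds (EventuallyF \<phi>) \<omega> t \<longleftrightarrow> (\<exists>t'\<ge>t. holds \<phi> \<omega> t')"
| "holds (UntilF \<phi> \<psi>) \<omega> t \<longleftrightarrow> (\<exists>t'\<ge>t. holds \<psi> \<omega> t' \<and> (\<forall>t''. t \<le> t'' \<and> t'' < t' \<longrightarrow> holds \<phi> \<omega> t''))"

definition J_LTL :: "env \<Rightarrow> (nat \<times> nat \<times> nat) ltlf \<Rightarrow> policy \<Rightarrow> real" where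
  "J_LTL E \<phi> \<pi> = (\<integral>\<omega>. (if holds \<phi> \<omega> 0 then 1 else 0) \<partial>traj_meas E \<pi>)"

type_synonym pol_order = "(policy \<times> policy) set"

definition induced_ord :: "env \<Rightarrow> (policy \<Rightarrow> real) \<Rightarrow> pol_order" where
  "induced_ord E J = {(\<pi>1, \<pi>2). \<pi>1 \<in> Pol E \<and> \<pi>2 \<in> Pol E \<and> J \<pi>1 \<ge> J \<pi>2}"

definition total_preorder_on :: "policy set \<Rightarrow> pol_order \<Rightarrow> bool" where
  "total_preorder_on P r \<longleftrightarrow> r \<subseteq> P \<times> P \<and> refl_on P r \<and> trans r \<and> total_on P r"

definition Ord_MR :: "env \<Rightarrow> pol_order set" where
  "Ord_MR E = {induced_ord E (J_MR E R \<gamma>) | R \<gamma>. 0 \<le> \<gamma> \<and> \<gamma> < 1}"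

definition Ord_RRL :: "env \<Rightarrow> pol_order set" where
  "Ord_RRL E = {induced_ord E (J_RRL E R \<alpha> F \<gamma>) | R \<alpha> F \<gamma>. 0 \<le> \<gamma> \<and> \<gamma> < 1}"

definition Ord_ONMR :: "env \<Rightarrow> pol_order set" where
  "Ord_ONMR E = {induced_ord E (J_ONMR E R f \<gamma>) | R f \<gamma>. 0 \<le> \<gamma> \<and> \<gamma> < 1}"

definition Ord_RM :: "env \<Rightarrow> pol_order set" where
  "Ord_RM E = {induced_ord E (J_RM E u0 dU dR \<gamma>) | U u0 dU dR \<gamma>.
      finite U \<and> u0 \<in> U
      \<and> (\<forall>u\<in>U. \<forall>s\<in>St E. \<forall>a\<in>Ac E. \<forall>s'\<in>St E. dU u s a s' \<in> U)
      \<and> 0 \<le> \<gamma> \<and> \<gamma> < 1}"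

definition Ord_LTL :: "env \<Rightarrow> pol_order set" where
  "Ord_LTL E = {induced_ord E (J_LTL E \<phi>) | \<phi>. set_ltlf \<phi> \<subseteq> St E \<times> Ac E \<times> St E}"

end

theory Submission
  imports Defs
begin

definition Dp :: "nat pmf \<Rightarrow> policy \<Rightarrow> (nat \<times> nat) pmf" where
  "Dp I \<pi> = bind_pmf I (\<lambda>s. map_pmf (Pair s) (\<pi> s))"

lemma pmf_Dp: "pmf (Dp I \<pi>) (s, a) = pmf I s * pmf (\<pi> s) a"
proof -
  have "pmf (Dp I \<pi>) (s, a) = (\<integral>x. pmf (map_pmf (Pair x) (\<pi> x)) (s, a) \<partial>measure_pmf I)"
    unfolding Dp_def by (simp add: pmf_bind)
  also have "\<dots> = (\<integral>x. (if x = s then pmf (\<pi> s) a else 0) \<partial>measure_pmf I)"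
  proof (rule Bochner_Integration.integral_cong[OF refl])
    fix x show "pmf (map_pmf (Pair x) (\<pi> x)) (s, a) = (if x = s then pmf (\<pi> s) a else 0)"
    proof (cases "x = s")
      case True then show ?thesis using pmf_map_inj'[of "Pair s" "\<pi> s" a] by (simp add: inj_def)
    next
      case False
      then have "(s, a) \<notin> set_pmf (map_pmf (Pair x) (\<pi> x))" by auto
      then show ?thesis using False by (simp add: set_pmf_eq)
    qed
  qed
  also have "\<dots> = (\<Sum>y\<in>{s}. (if y = s then pmf (\<pi> s) a else 0) * pmf I y)"
    by (rule integral_measure_pmf_real) (auto split: if_splits)
  finally show ?thesis by simp
qed

lemma sets_S: "sets (stream_space (measure_pmf D)) = sets (stream_space (count_space UNIV))"
  by (rule sets_stream_space_cong) simp

lemma space_S: "space (stream_space (measure_pmf D)) = UNIV"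
  by (simp add: space_stream_space)

lemma in_sstart_UNIV: "\<omega> \<in> sstart UNIV xs \<longleftrightarrow> stake (length xs) \<omega> = xs"
  by (induction xs arbitrary: \<omega>) (simp_all add: streams_UNIV)

lemma sstart_UNIV: "sstart UNIV xs = {\<omega>. stake (length xs) \<omega> = xs}"
  using in_sstart_UNIV by blast

lemma cyl_emeasure:
  "emeasure (stream_space (measure_pmf D)) {\<omega> \<in> space (stream_space (measure_pmf D)). stake (length xs) \<omega> = xs}
     = ennreal (prod_list (map (pmf D) xs))"
proof (induction xs)
  case Nil
  interpret S: prob_space "stream_space (measure_pmf D)"
    by (rule prob_space.prob_space_stream_space) (rule prob_space_measure_pmf)
  show ?case using S.emeasure_space_1 by simp
next
  case (Cons x xs)
  let ?S = "stream_space (measure_pmf D)"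
  let ?C = "\<lambda>ys. {\<omega> \<in> space ?S. stake (length ys) \<omega> = ys}"
  have meas: "?C ys \<in> sets ?S" for ys
    using sets_sstart[of UNIV ys] by (simp add: sets_S space_S sstart_UNIV)
  have "emeasure ?S (?C (x#xs)) = (\<integral>\<^sup>+t. emeasure ?S {\<omega>\<in>space ?S. t ## \<omega> \<in> ?C (x#xs)} \<partial>measure_pmf D)"
    by (rule prob_space.emeasure_stream_space[OF prob_space_measure_pmf meas])
  also have "\<dots> = (\<integral>\<^sup>+t. emeasure ?S (?C xs) * indicator {x} t \<partial>measure_pmf D)"
    by (rule nn_integral_cong) (auto simp: space_S split: split_indicator)
  also have "\<dots> = emeasure ?S (?C xs) * emeasure (measure_pmf D) {x}"
    by (simp add: nn_integral_cmult_indicator)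
  also have "\<dots> = ennreal (prod_list (map (pmf D) (x#xs)))"
    using Cons by (simp add: emeasure_pmf_single ennreal_mult' mult.commute prod_list_nonneg)
  finally show ?case .
qed

definition I0 :: "nat pmf" where "I0 = pmf_of_set {0, 1}"

definition E0 :: env where
  "E0 = \<lparr>St = {0, 1}, Ac = {0, 1}, Tr = (\<lambda>_ _. I0), In = I0\<rparr>"

lemma E0_simps[simp]: "St E0 = {0,1}" "Ac E0 = {0,1}" "Tr E0 = (\<lambda>_ _. I0)" "In E0 = I0"
  by (simp_all add: E0_def)

lemma set_I0[simp]: "set_pmf I0 = {0,1}"
  by (simp add: I0_def)

lemma pmf_I0: "pmf I0 s = (if s \<in> {0,1} then 1/2 else 0)"
  by (simp add: I0_def)

lemma valid_E0: "valid_env E0"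
  by (simp add: valid_env_def)

lemma pref_prob_E0: "pref_prob \<pi> (\<lambda>_ _. I) I xs = prod_list (map (pmf (Dp I \<pi>)) xs)"
  by (induction xs) (auto simp: pmf_Dp)

lemma traj_meas_E0: "traj_meas E0 \<pi> = stream_space (measure_pmf (Dp I0 \<pi>))"
proof -
  let ?S = "stream_space (measure_pmf (Dp I0 \<pi>))"
  define P where "P M \<longleftrightarrow> prob_space M
      \<and> sets M = sets (stream_space (count_space UNIV))
      \<and> (\<forall>xs. emeasure M {\<omega> \<in> space M. stake (length xs) \<omega> = xs}
               = ennreal (pref_prob \<pi> (Tr E0) (In E0) xs))" for M
  have PS: "P ?S"
    unfolding P_def
    by (simp add: prob_space.prob_space_stream_space[OF prob_space_measure_pmf] sets_S
                  cyl_emeasure pref_prob_E0)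
  have tm: "traj_meas E0 \<pi> = (SOME M. P M)" unfolding traj_meas_def P_def ..
  have "P (SOME M. P M)" using PS by (rule someI)
  then have PM: "P (traj_meas E0 \<pi>)" using tm by simp
  show ?thesis
  proof (rule stream_space_eq_sstart[of UNIV])
    show "countable (UNIV :: (nat \<times> nat) set)" by simp
    show "prob_space (traj_meas E0 \<pi>)" using PM by (simp add: P_def)
    show "prob_space ?S" by (rule prob_space.prob_space_stream_space[OF prob_space_measure_pmf])
    show "sets (traj_meas E0 \<pi>) = sets (stream_space (count_space UNIV))" using PM by (simp add: P_def)
    show "sets ?S = sets (stream_space (count_space UNIV))" by (rule sets_S)
    show "AE x in traj_meas E0 \<pi>. x \<in> streams UNIV" by (simp add: streams_UNIV)
    show "AE x in ?S. x \<in> streams UNIV" by (simp add: streams_UNIV)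
    fix xs :: "(nat \<times> nat) list"
    have sp: "space (traj_meas E0 \<pi>) = UNIV"
      using PM sets_eq_imp_space_eq[of "traj_meas E0 \<pi>" "stream_space (count_space UNIV)"]
      by (simp add: P_def space_stream_space streams_UNIV)
    have "emeasure (traj_meas E0 \<pi>) (sstart UNIV xs) = ennreal (pref_prob \<pi> (Tr E0) (In E0) xs)"
      using PM sp by (simp add: P_def sstart_UNIV)
    also have "\<dots> = emeasure ?S (sstart UNIV xs)"
      using PS by (simp add: P_def sstart_UNIV space_S)
    finally show "emeasure (traj_meas E0 \<pi>) (sstart UNIV xs) = emeasure ?S (sstart UNIV xs)" .
  qed
qed


lemma stl_inv: "distr (stream_space (measure_pmf D)) (stream_space (measure_pmf D)) stl = stream_space (measure_pmf D)"
  (is "distr ?S ?S stl = ?S")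
proof (rule measure_eqI)
  show "sets (distr ?S ?S stl) = sets ?S" by simp
  fix A assume "A \<in> sets (distr ?S ?S stl)"
  then have A: "A \<in> sets ?S" by simp
  have X: "stl -` A \<inter> space ?S \<in> sets ?S"
    using A by (rule measurable_sets[OF measurable_stl])
  have "emeasure (distr ?S ?S stl) A = emeasure ?S (stl -` A \<inter> space ?S)"
    by (rule emeasure_distr[OF measurable_stl A])
  also have "\<dots> = (\<integral>\<^sup>+t. emeasure ?S {x\<in>space ?S. t ## x \<in> stl -` A \<inter> space ?S} \<partial>measure_pmf D)"
    by (rule prob_space.emeasure_stream_space[OF prob_space_measure_pmf X])
  also have "\<dots> = (\<integral>\<^sup>+t. emeasure ?S A \<partial>measure_pmf D)"
    by (rule nn_integral_cong) (simp add: space_S)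
  also have "\<dots> = emeasure ?S A"
    by simp
  finally show "emeasure (distr ?S ?S stl) A = emeasure ?S A" .
qed

lemma sdrop_inv: "distr (stream_space (measure_pmf D)) (stream_space (measure_pmf D)) (sdrop n) = stream_space (measure_pmf D)"
proof (induction n)
  case 0
  have "sdrop 0 = (\<lambda>x. x)" by (rule ext) simp
  then show ?case by (simp add: distr_id)
next
  case (Suc n)
  have e: "sdrop (Suc n) = sdrop n \<circ> stl" by (rule ext) simp
  show ?case
    unfolding e
    by (subst distr_distr[symmetric, of _ "stream_space (measure_pmf D)"]) (simp_all add: stl_inv Suc)
qed

definition P3 :: "(nat \<times> nat) stream \<Rightarrow> (nat \<times> nat) \<times> (nat \<times> nat) \<times> (nat \<times> nat)" where
  "P3 \<omega> = (\<omega> !! 0, \<omega> !! Suc 0, \<omega> !! Suc (Suc 0))"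

lemma P3_pre: "P3 -` {(a0, a1, a2)} = {\<omega>. stake (length [a0,a1,a2]) \<omega> = [a0, a1, a2]}"
  by (auto simp: P3_def)

lemma P3_meas: "P3 \<in> measurable (stream_space (measure_pmf D)) (count_space UNIV)"
proof (subst measurable_count_space_eq2_countable, safe)
  fix a :: "(nat \<times> nat) \<times> (nat \<times> nat) \<times> (nat \<times> nat)"
  obtain a0 a1 a2 where a: "a = (a0, a1, a2)" by (cases a) auto
  have "P3 -` {a} \<inter> space (stream_space (measure_pmf D)) = sstart UNIV [a0, a1, a2]"
    unfolding a P3_pre space_S sstart_UNIV by simp
  then show "P3 -` {a} \<inter> space (stream_space (measure_pmf D)) \<in> sets (stream_space (measure_pmf D))"
    by (simp add: sets_S)
qed simp

lemma P3_distr: "distr (stream_space (measure_pmf D)) (count_space UNIV) P3 = measure_pmf (pair_pmf D (pair_pmf D D))"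
proof (rule measure_eqI_countable[of _ UNIV])
  show "sets (distr (stream_space (measure_pmf D)) (count_space UNIV) P3) = Pow UNIV" by simp
  show "sets (measure_pmf (pair_pmf D (pair_pmf D D))) = Pow UNIV" by simp
  show "countable (UNIV :: ((nat \<times> nat) \<times> (nat \<times> nat) \<times> (nat \<times> nat)) set)" by simp
  fix a :: "(nat \<times> nat) \<times> (nat \<times> nat) \<times> (nat \<times> nat)"
  obtain a0 a1 a2 where a: "a = (a0, a1, a2)" by (cases a) auto
  have "emeasure (distr (stream_space (measure_pmf D)) (count_space UNIV) P3) {a}
      = emeasure (stream_space (measure_pmf D)) (P3 -` {a} \<inter> space (stream_space (measure_pmf D)))"
    by (rule emeasure_distr[OF P3_meas]) simp
  also have "\<dots> = emeasure (stream_space (measure_pmf D)) {\<omega> \<in> space (stream_space (measure_pmf D)). stake (length [a0,a1,a2]) \<omega> = [a0,a1,a2]}"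
    unfolding a P3_pre by (simp add: Int_commute Collect_conj_eq space_S)
  also have "\<dots> = ennreal (pmf D a0 * (pmf D a1 * pmf D a2))"
    by (subst cyl_emeasure) simp
  also have "\<dots> = emeasure (measure_pmf (pair_pmf D (pair_pmf D D))) {a}"
    by (simp add: a emeasure_pmf_single pmf_pair)
  finally show "emeasure (distr (stream_space (measure_pmf D)) (count_space UNIV) P3) {a} = emeasure (measure_pmf (pair_pmf D (pair_pmf D D))) {a}" .
qed

lemma integral_P3:
  fixes h :: "(nat \<times> nat) \<times> (nat \<times> nat) \<times> (nat \<times> nat) \<Rightarrow> real"
  shows "(\<integral>\<omega>. h (P3 \<omega>) \<partial>stream_space (measure_pmf D)) = (\<integral>y. h y \<partial>measure_pmf (pair_pmf D (pair_pmf D D)))"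
proof -
  have "(\<integral>\<omega>. h (P3 \<omega>) \<partial>stream_space (measure_pmf D)) = (\<integral>y. h y \<partial>distr (stream_space (measure_pmf D)) (count_space UNIV) P3)"
    by (rule integral_distr[symmetric, OF P3_meas]) simp
  then show ?thesis by (simp add: P3_distr)
qed


lemma disc_integral:
  fixes G :: "(nat \<times> nat) stream \<Rightarrow> real"
  assumes Gm[measurable]: "G \<in> borel_measurable (stream_space (measure_pmf D))"
    and Gb: "\<And>\<omega>. \<bar>G \<omega>\<bar> \<le> K" and g0: "0 \<le> \<gamma>" and g1: "\<gamma> < 1"
  shows "(\<integral>\<omega>. (\<Sum>t. \<gamma>^t * G (sdrop t \<omega>)) \<partial>stream_space (measure_pmf D))
         = (\<integral>\<omega>. G \<omega> \<partial>stream_space (measure_pmf D)) / (1 - \<gamma>)"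
proof -
  let ?S = "stream_space (measure_pmf D)"
  interpret S: prob_space ?S
    by (rule prob_space.prob_space_stream_space) (rule prob_space_measure_pmf)
  let ?c = "\<integral>\<omega>. G \<omega> \<partial>?S"
  have K0: "0 \<le> K" using Gb[of undefined] by linarith
  have m: "(\<lambda>\<omega>. \<gamma>^t * G (sdrop t \<omega>)) \<in> borel_measurable ?S" for t
    by measurable
  have bnd: "\<bar>\<gamma>^t * G (sdrop t \<omega>)\<bar> \<le> \<gamma>^t * K" for t \<omega>
    using Gb[of "sdrop t \<omega>"] g0 by (simp add: abs_mult mult_left_mono)
  have int: "integrable ?S (\<lambda>\<omega>. \<gamma>^t * G (sdrop t \<omega>))" for t
    by (rule S.integrable_const_bound[where B="\<gamma>^t * K"]) (use bnd m in auto)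
  have each: "(\<integral>\<omega>. G (sdrop t \<omega>) \<partial>?S) = ?c" for t
  proof -
    have "(\<integral>\<omega>. G (sdrop t \<omega>) \<partial>?S) = (\<integral>\<omega>. G \<omega> \<partial>distr ?S ?S (sdrop t))"
      by (rule integral_distr[symmetric]) simp_all
    then show ?thesis by (simp add: sdrop_inv)
  qed
  have sg: "summable (\<lambda>t. \<gamma>^t * K)"
    using g0 g1 by (intro summable_mult2) simp
  have sumnorm: "AE \<omega> in ?S. summable (\<lambda>t. norm (\<gamma>^t * G (sdrop t \<omega>)))"
    by (intro AE_I2 summable_comparison_test[OF _ sg]) (use bnd in auto)
  have ib: "norm (\<integral>\<omega>. norm (\<gamma>^t * G (sdrop t \<omega>)) \<partial>?S) \<le> \<gamma>^t * K" for t
  proof -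
    have "(\<integral>\<omega>. norm (\<gamma>^t * G (sdrop t \<omega>)) \<partial>?S) \<le> (\<integral>\<omega>. \<gamma>^t * K \<partial>?S)"
      by (rule integral_mono) (use int bnd in auto)
    also have "\<dots> = \<gamma>^t * K" by (simp add: S.prob_space)
    finally show ?thesis by simp
  qed
  have sumint: "summable (\<lambda>t. (\<integral>\<omega>. norm (\<gamma>^t * G (sdrop t \<omega>)) \<partial>?S))"
    by (rule summable_comparison_test[OF _ sg]) (use ib in auto)
  have "(\<integral>\<omega>. (\<Sum>t. \<gamma>^t * G (sdrop t \<omega>)) \<partial>?S) = (\<Sum>t. (\<integral>\<omega>. \<gamma>^t * G (sdrop t \<omega>) \<partial>?S))"
    by (rule integral_suminf[OF int sumnorm sumint])
  also have "\<dots> = (\<Sum>t. \<gamma>^t * ?c)" by (simp add: each)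
  also have "\<dots> = (\<Sum>t. \<gamma>^t) * ?c"
    by (rule suminf_mult2[symmetric]) (use g0 g1 in simp)
  also have "\<dots> = ?c / (1 - \<gamma>)"
    using g0 g1 by (simp add: suminf_geometric)
  finally show ?thesis .
qed


lemma set_pmf_Dp: "set_pmf (Dp I \<pi>) = (SIGMA s:set_pmf I. set_pmf (\<pi> s))"
  by (auto simp: Dp_def)

definition atomsA :: "nat \<Rightarrow> (nat \<times> nat \<times> nat) ltlf" where
  "atomsA a = OrF (OrF (Atom (0,a,0)) (Atom (0,a,1))) (OrF (Atom (1,a,0)) (Atom (1,a,1)))"

definition phi :: "(nat \<times> nat \<times> nat) ltlf" where
  "phi = AndF (atomsA 1) (NextF (atomsA 0))"

lemma holds_atomsA: "holds (atomsA a) \<omega> t \<longleftrightarrow> st \<omega> t \<in> {0,1} \<and> ac \<omega> t = a \<and> st \<omega> (Suc t) \<in> {0,1}"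
  by (auto simp: atomsA_def)

definition B1 :: "(nat \<times> nat) set" where "B1 = {y. fst y \<in> {0,1} \<and> snd y = 1}"
definition B0 :: "(nat \<times> nat) set" where "B0 = {y. fst y \<in> {0,1} \<and> snd y = 0}"
definition B2 :: "(nat \<times> nat) set" where "B2 = {y. fst y \<in> {0,1}}"

lemma B1_eq: "B1 = {(0,1),(1,1)}" by (auto simp: B1_def)
lemma B0_eq: "B0 = {(0,0),(1,0)}" by (auto simp: B0_def)

lemma holds_phi: "(if holds phi \<omega> 0 then 1 else 0 :: real) = indicator (B1 \<times> B0 \<times> B2) (P3 \<omega>)"
  by (auto simp: phi_def holds_atomsA P3_def st_def ac_def B1_def B0_def B2_def split: split_indicator)

definition xp :: "policy \<Rightarrow> real" where "xp \<pi> = (pmf (\<pi> 0) 1 + pmf (\<pi> 1) 1) / 2"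

lemma Pol_E0: "\<pi> \<in> Pol E0 \<longleftrightarrow> set_pmf (\<pi> 0) \<subseteq> {0,1} \<and> set_pmf (\<pi> 1) \<subseteq> {0,1}"
  by (simp add: Pol_def)

lemma pmf01: assumes "set_pmf p \<subseteq> {0,1::nat}" shows "pmf p 0 = 1 - pmf p 1"
proof -
  have "(\<Sum>x\<in>{0,1::nat}. pmf p x) = 1" by (rule sum_pmf_eq_1) (use assms in auto)
  then show ?thesis by simp
qed

lemma prob_B1: "measure_pmf.prob (Dp I0 \<pi>) B1 = xp \<pi>"
  by (simp add: B1_eq measure_measure_pmf_finite pmf_Dp pmf_I0 xp_def)

lemma prob_B0: assumes "\<pi> \<in> Pol E0" shows "measure_pmf.prob (Dp I0 \<pi>) B0 = 1 - xp \<pi>"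
  using assms by (simp add: B0_eq measure_measure_pmf_finite pmf_Dp pmf_I0 xp_def Pol_E0 pmf01) (simp add: field_simps)

lemma prob_B2: "measure_pmf.prob (Dp I0 \<pi>) B2 = 1"
  by (subst measure_pmf.prob_eq_1) (auto simp: AE_measure_pmf_iff set_pmf_Dp B2_def)

lemma prob_UNIV: "measure_pmf.prob (Dp I0 \<pi>) UNIV = 1"
  by simp

lemma J_LTL_val: assumes "\<pi> \<in> Pol E0" shows "J_LTL E0 phi \<pi> = xp \<pi> * (1 - xp \<pi>)"
proof -
  have "J_LTL E0 phi \<pi> = (\<integral>\<omega>. indicator (B1 \<times> B0 \<times> B2) (P3 \<omega>) \<partial>stream_space (measure_pmf (Dp I0 \<pi>)))"
    unfolding J_LTL_def traj_meas_E0 holds_phi ..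
  also have "\<dots> = (\<integral>y. indicator (B1 \<times> B0 \<times> B2) y \<partial>measure_pmf (pair_pmf (Dp I0 \<pi>) (pair_pmf (Dp I0 \<pi>) (Dp I0 \<pi>))))"
    by (rule integral_P3)
  also have "\<dots> = measure_pmf.prob (pair_pmf (Dp I0 \<pi>) (pair_pmf (Dp I0 \<pi>) (Dp I0 \<pi>))) (B1 \<times> B0 \<times> B2)"
    by simp
  also have "\<dots> = xp \<pi> * (1 - xp \<pi>)"
    by (simp add: measure_pmf_prob_product prob_B1 prob_B0[OF assms] prob_B2)
  finally show ?thesis .
qed

definition R1 :: "nat \<Rightarrow> nat \<Rightarrow> nat \<Rightarrow> real" where "R1 s a s' = (if a = 1 then 1 else 0)"
definition f1 :: "real \<Rightarrow> real" where "f1 y = y * (1 - y)"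

lemma suminf_0pow: "(\<Sum>t. (0::real)^t * g t) = g 0"
  by (subst suminf_finite[of "{0}"]) auto

lemma J_ONMR_val: assumes "\<pi> \<in> Pol E0" shows "J_ONMR E0 R1 f1 0 \<pi> = xp \<pi> * (1 - xp \<pi>)"
proof -
  have e: "rew_in E0 R1 (st \<omega> 0) (ac \<omega> 0) (st \<omega> (Suc 0)) = indicator (B1 \<times> B2 \<times> UNIV) (P3 \<omega>)" for \<omega>
    by (auto simp: rew_in_def R1_def P3_def st_def ac_def B1_def B2_def split: split_indicator)
  have "J_MR E0 R1 0 \<pi> = (\<integral>\<omega>. indicator (B1 \<times> B2 \<times> UNIV) (P3 \<omega>) \<partial>stream_space (measure_pmf (Dp I0 \<pi>)))"
    unfolding J_MR_def traj_meas_E0 suminf_0pow e ..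
  also have "\<dots> = (\<integral>y. indicator (B1 \<times> B2 \<times> UNIV) y \<partial>measure_pmf (pair_pmf (Dp I0 \<pi>) (pair_pmf (Dp I0 \<pi>) (Dp I0 \<pi>))))"
    by (rule integral_P3)
  also have "\<dots> = measure_pmf.prob (pair_pmf (Dp I0 \<pi>) (pair_pmf (Dp I0 \<pi>) (Dp I0 \<pi>))) (B1 \<times> B2 \<times> UNIV)"
    by simp
  also have "\<dots> = xp \<pi>"
    by (simp add: measure_pmf_prob_product prob_B1 prob_B2 del: UNIV_Times_UNIV)
  finally show ?thesis by (simp add: J_ONMR_def f1_def)
qed

definition dU0 :: "nat \<Rightarrow> nat \<Rightarrow> nat \<Rightarrow> nat \<Rightarrow> nat" where
  "dU0 u s a s' = (if u = 0 \<and> s \<in> {0,1} \<and> a = 1 \<and> s' \<in> {0,1} then 1 else 2)"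
definition dR0 :: "nat \<Rightarrow> nat \<Rightarrow> nat \<Rightarrow> nat \<Rightarrow> nat \<Rightarrow> real" where
  "dR0 u v = (if u = 1 then (\<lambda>s a s'. if a = 0 then 1 else 0) else (\<lambda>_ _ _. 0))"

lemma rm_late: "rm_state 0 dU0 \<omega> (Suc (Suc t)) = 2"
  by (induction t) (auto simp: dU0_def)

lemma J_RM_val: "J_RM E0 0 dU0 dR0 (1/2) \<pi> = (1/2) * J_LTL E0 phi \<pi>"
proof -
  have e: "(\<Sum>t. (1/2::real)^t * rew_in E0 (dR0 (rm_state 0 dU0 \<omega> t) (rm_state 0 dU0 \<omega> (Suc t))) (st \<omega> t) (ac \<omega> t) (st \<omega> (Suc t)))
       = (1/2) * (if holds phi \<omega> 0 then 1 else 0)" for \<omega>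
  proof -
    have z: "(1/2::real)^t * rew_in E0 (dR0 (rm_state 0 dU0 \<omega> t) (rm_state 0 dU0 \<omega> (Suc t))) (st \<omega> t) (ac \<omega> t) (st \<omega> (Suc t)) = 0"
      if "t \<notin> {1}" for t
    proof (cases t)
      case 0 then show ?thesis by (simp add: dR0_def rew_in_def)
    next
      case (Suc t')
      with that obtain t'' where "t = Suc (Suc t'')" by (cases t') auto
      then show ?thesis by (simp add: rm_late dR0_def rew_in_def del: rm_state.simps)
    qed
    show ?thesis
      by (subst suminf_finite[of "{1}"]) (use z in \<open>auto simp: dR0_def dU0_def rew_in_def phi_def holds_atomsA\<close>)
  qed
  show ?thesis unfolding J_RM_def J_LTL_def e by simp
qed


definition pd :: "nat \<Rightarrow> nat \<Rightarrow> policy" where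
  "pd p q = (\<lambda>s. return_pmf (if s = 0 then p else q))"

lemma pd_Pol: "p \<in> {0,1} \<Longrightarrow> q \<in> {0,1} \<Longrightarrow> pd p q \<in> Pol E0"
  by (auto simp: Pol_def pd_def)

lemma xp_pd: "xp (pd p q) = ((if p = 1 then 1 else 0) + (if q = 1 then 1 else 0)) / 2"
  by (simp add: xp_def pd_def indicator_def)

definition UU :: "(nat \<Rightarrow> nat \<Rightarrow> nat \<Rightarrow> real) \<Rightarrow> real \<Rightarrow> (nat pmf \<Rightarrow> real) \<Rightarrow> nat \<Rightarrow> real" where
  "UU R \<alpha> F p = (rew_in E0 R 0 p 0 + rew_in E0 R 0 p 1 - 2 * \<alpha> * F (return_pmf p)) / 4"
definition VV :: "(nat \<Rightarrow> nat \<Rightarrow> nat \<Rightarrow> real) \<Rightarrow> real \<Rightarrow> (nat pmf \<Rightarrow> real) \<Rightarrow> nat \<Rightarrow> real" where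
  "VV R \<alpha> F q = (rew_in E0 R 1 q 0 + rew_in E0 R 1 q 1 - 2 * \<alpha> * F (return_pmf q)) / 4"

lemma rew_in_bound:
  "\<bar>rew_in E0 R s a s'\<bar> \<le> (\<Sum>z\<in>{0,1::nat}\<times>{0,1::nat}\<times>{0,1::nat}. \<bar>R (fst z) (fst (snd z)) (snd (snd z))\<bar>)"
proof (cases "s \<in> {0,1} \<and> a \<in> {0,1} \<and> s' \<in> {0,1}")
  case True
  then have "\<bar>rew_in E0 R s a s'\<bar> = (\<lambda>z. \<bar>R (fst z) (fst (snd z)) (snd (snd z))\<bar>) (s, a, s')"
    by (simp add: rew_in_def)
  also have "\<dots> \<le> (\<Sum>z\<in>{0,1::nat}\<times>{0,1::nat}\<times>{0,1::nat}. \<bar>R (fst z) (fst (snd z)) (snd (snd z))\<bar>)"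
    by (rule member_le_sum) (use True in auto)
  finally show ?thesis .
next
  case False
  then have "rew_in E0 R s a s' = 0" unfolding rew_in_def by auto
  then show ?thesis by (simp add: sum_nonneg)
qed

lemma sum_times: "(\<Sum>a\<in>A \<times> B. f a) = (\<Sum>x\<in>A. \<Sum>y\<in>B. f (x, y))"
  by (simp add: sum.cartesian_product)

lemma J_RRL_pd:
  assumes g0: "0 \<le> \<gamma>" and g1: "\<gamma> < 1"
  shows "J_RRL E0 R \<alpha> F \<gamma> (pd p q) = (UU R \<alpha> F p + VV R \<alpha> F q) / (1 - \<gamma>)"
proof -
  let ?\<pi> = "pd p q"
  let ?D = "Dp I0 ?\<pi>"
  define h where "h y = rew_in E0 R (fst (fst y)) (snd (fst y)) (fst (fst (snd y)))
      - \<alpha> * (if fst (fst y) \<in> {0,1} then F (?\<pi> (fst (fst y))) else 0)"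
    for y :: "(nat \<times> nat) \<times> (nat \<times> nat) \<times> (nat \<times> nat)"
  define G where "G \<omega> = h (P3 \<omega>)" for \<omega>
  define SR where "SR = (\<Sum>z\<in>{0,1::nat}\<times>{0,1::nat}\<times>{0,1::nat}. \<bar>R (fst z) (fst (snd z)) (snd (snd z))\<bar>)"
  define K where "K = SR + \<bar>\<alpha>\<bar> * (\<bar>F (?\<pi> 0)\<bar> + \<bar>F (?\<pi> 1)\<bar>)"
  have Gm: "G \<in> borel_measurable (stream_space (measure_pmf ?D))"
    unfolding G_def by (rule measurable_compose[OF P3_meas]) simp
  have setD: "set_pmf ?D = {(0,p),(1,q)}"
    unfolding set_pmf_Dp set_I0 pd_def by auto
  have Gb: "\<bar>G \<omega>\<bar> \<le> K" for \<omega>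
  proof -
    define y where "y = P3 \<omega>"
    define A where "A = rew_in E0 R (fst (fst y)) (snd (fst y)) (fst (fst (snd y)))"
    define B where "B = (if fst (fst y) \<in> {0,1} then F (?\<pi> (fst (fst y))) else 0)"
    have b1: "\<bar>A\<bar> \<le> SR"
      unfolding SR_def A_def by (rule rew_in_bound)
    have b2: "\<bar>B\<bar> \<le> \<bar>F (?\<pi> 0)\<bar> + \<bar>F (?\<pi> 1)\<bar>"
      unfolding B_def by auto
    have b3: "\<bar>\<alpha>\<bar> * \<bar>B\<bar> \<le> \<bar>\<alpha>\<bar> * (\<bar>F (?\<pi> 0)\<bar> + \<bar>F (?\<pi> 1)\<bar>)"
      by (rule mult_left_mono[OF b2]) simp
    have hy: "G \<omega> = A - \<alpha> * B" unfolding G_def h_def A_def B_def y_def ..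
    have "\<bar>A - \<alpha> * B\<bar> \<le> \<bar>A\<bar> + \<bar>\<alpha>\<bar> * \<bar>B\<bar>"
      using abs_triangle_ineq4[of A "\<alpha> * B"] by (simp add: abs_mult)
    then show ?thesis using b1 b3 hy by (simp add: K_def)
  qed
  have integrand: "(\<Sum>t. \<gamma> ^ t * (rew_in E0 R (st \<omega> t) (ac \<omega> t) (st \<omega> (Suc t))
        - \<alpha> * (if st \<omega> t \<in> St E0 then F (?\<pi> (st \<omega> t)) else 0))) = (\<Sum>t. \<gamma>^t * G (sdrop t \<omega>))" for \<omega>
    unfolding G_def h_def P3_def st_def ac_def sdrop_snth fst_conv snd_conv add_0_right add_Suc_right E0_simps ..
  have "J_RRL E0 R \<alpha> F \<gamma> ?\<pi> = (\<integral>\<omega>. (\<Sum>t. \<gamma>^t * G (sdrop t \<omega>)) \<partial>stream_space (measure_pmf ?D))"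
    unfolding J_RRL_def traj_meas_E0 integrand ..
  also have "\<dots> = (\<integral>\<omega>. G \<omega> \<partial>stream_space (measure_pmf ?D)) / (1 - \<gamma>)"
    by (rule disc_integral[OF Gm Gb g0 g1])
  also have "(\<integral>\<omega>. G \<omega> \<partial>stream_space (measure_pmf ?D)) = (\<integral>y. h y \<partial>measure_pmf (pair_pmf ?D (pair_pmf ?D ?D)))"
    unfolding G_def by (rule integral_P3)
  also have "\<dots> = (\<Sum>a\<in>{(0,p),(1,q)} \<times> {(0,p),(1,q)} \<times> {(0::nat,p),(1,q)}.
                   h a * pmf (pair_pmf ?D (pair_pmf ?D ?D)) a)"
    by (rule integral_measure_pmf_real) (simp_all add: set_pair_pmf setD)
  also have "\<dots> = UU R \<alpha> F p + VV R \<alpha> F q"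
  proof -
    have hP: "h ((0,p), y1, y2) = rew_in E0 R 0 p (fst y1) - \<alpha> * F (return_pmf p)"
      "h ((Suc 0,q), y1, y2) = rew_in E0 R 1 q (fst y1) - \<alpha> * F (return_pmf q)" for y1 y2
      by (simp_all add: h_def pd_def)
    have pm: "pmf ?D (0,p) = 1/2" "pmf ?D (Suc 0,q) = 1/2"
      by (simp_all add: pmf_Dp pmf_I0 pd_def)
    show ?thesis
      by (simp add: sum_times pmf_pair pm hP UU_def VV_def) (simp add: field_simps)
  qed
  finally show ?thesis .
qed


lemma induced_scale:
  assumes "\<And>\<pi>. \<pi> \<in> Pol E \<Longrightarrow> J1 \<pi> = c * J2 \<pi>" and "c > 0"
  shows "induced_ord E J1 = induced_ord E J2"
  using assms by (auto simp: induced_ord_def)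

lemma J_MR_RRL: "J_MR E R \<gamma> = J_RRL E R 0 (\<lambda>_. 0) \<gamma>"
  by (rule ext) (simp add: J_MR_def J_RRL_def)

lemma L_pd:
  "J_LTL E0 phi (pd 0 0) = 0" "J_LTL E0 phi (pd 1 1) = 0"
  "J_LTL E0 phi (pd 0 1) = 1/4" "J_LTL E0 phi (pd 1 0) = 1/4"
  by (simp_all add: J_LTL_val pd_Pol xp_pd)

lemma not_RRL:
  assumes g0: "0 \<le> \<gamma>" and g1: "\<gamma> < 1"
  shows "induced_ord E0 (J_LTL E0 phi) \<noteq> induced_ord E0 (J_RRL E0 R \<alpha> F \<gamma>)"
proof
  assume eq: "induced_ord E0 (J_LTL E0 phi) = induced_ord E0 (J_RRL E0 R \<alpha> F \<gamma>)"
  let ?L = "J_LTL E0 phi" and ?J = "J_RRL E0 R \<alpha> F \<gamma>"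
  have iff: "?L a \<ge> ?L b \<longleftrightarrow> ?J a \<ge> ?J b" if "a \<in> Pol E0" "b \<in> Pol E0" for a b
  proof -
    have "(a, b) \<in> induced_ord E0 ?L \<longleftrightarrow> (a, b) \<in> induced_ord E0 ?J" using eq by simp
    then show ?thesis using that by (simp add: induced_ord_def)
  qed
  have P: "pd 0 0 \<in> Pol E0" "pd 1 1 \<in> Pol E0" "pd 0 1 \<in> Pol E0" "pd 1 0 \<in> Pol E0"
    by (simp_all add: pd_Pol)
  have k: "1 - \<gamma> > 0" using g1 by simp
  have c: "\<And>x y. x / (1 - \<gamma>) \<le> y / (1 - \<gamma>) \<longleftrightarrow> x \<le> y" using k by (simp add: divide_le_cancel)
  have i1: "?J (pd 1 1) \<le> ?J (pd 0 0)" using iff[OF P(1) P(2)] unfolding L_pd by simp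
  have i2: "?J (pd 0 0) \<le> ?J (pd 1 1)" using iff[OF P(2) P(1)] unfolding L_pd by simp
  have i3: "?J (pd 1 0) \<le> ?J (pd 0 1)" using iff[OF P(3) P(4)] unfolding L_pd by simp
  have i4: "?J (pd 0 1) \<le> ?J (pd 1 0)" using iff[OF P(4) P(3)] unfolding L_pd by simp
  have i5: "\<not> ?J (pd 0 1) \<le> ?J (pd 0 0)" using iff[OF P(1) P(3)] unfolding L_pd by simp
  note vals = J_RRL_pd[OF g0 g1, of R \<alpha> F]
  from i1 i2 i3 i4 i5 show False
    unfolding vals c by linarith
qed

theorem mainTheorem11:
  shows "\<exists>E r. valid_env E \<and> total_preorder_on (Pol E) r
           \<and> r \<in> Ord_RM E \<inter> Ord_ONMR E \<inter> Ord_LTL E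
           \<and> r \<notin> Ord_MR E \<union> Ord_RRL E"
proof (intro exI conjI)
  let ?r = "induced_ord E0 (J_LTL E0 phi)"
  show "valid_env E0" by (rule valid_E0)
  show "total_preorder_on (Pol E0) ?r"
    by (auto simp: total_preorder_on_def induced_ord_def refl_on_def trans_def total_on_def)
  have rm: "induced_ord E0 (J_RM E0 0 dU0 dR0 (1/2)) = ?r"
    by (rule induced_scale[where c="1/2"]) (simp_all add: J_RM_val)
  have "induced_ord E0 (J_RM E0 0 dU0 dR0 (1/2)) \<in> Ord_RM E0"
    unfolding Ord_RM_def
    apply (rule CollectI)
    apply (rule exI[of _ "{0,1,2}"])
    apply (rule exI[of _ 0])
    apply (rule exI[of _ dU0])
    apply (rule exI[of _ dR0])
    apply (rule exI[of _ "1/2"])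
    apply (auto simp: dU0_def)
    done
  moreover have onmr: "induced_ord E0 (J_ONMR E0 R1 f1 0) = ?r"
    by (rule induced_scale[where c=1]) (simp_all add: J_ONMR_val J_LTL_val)
  moreover have "induced_ord E0 (J_ONMR E0 R1 f1 0) \<in> Ord_ONMR E0"
    unfolding Ord_ONMR_def by (rule CollectI, intro exI[of _ R1] exI[of _ f1] exI[of _ 0]) simp
  moreover have "?r \<in> Ord_LTL E0"
    unfolding Ord_LTL_def by (rule CollectI, rule exI[of _ phi]) (auto simp: phi_def atomsA_def)
  ultimately show "?r \<in> Ord_RM E0 \<inter> Ord_ONMR E0 \<inter> Ord_LTL E0"
    using rm by simp
  show "?r \<notin> Ord_MR E0 \<union> Ord_RRL E0"
  proof
    assume "?r \<in> Ord_MR E0 \<union> Ord_RRL E0"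
    then show False
    proof
      assume "?r \<in> Ord_MR E0"
      then obtain R \<gamma> where "0 \<le> \<gamma>" "\<gamma> < 1" "?r = induced_ord E0 (J_MR E0 R \<gamma>)"
        unfolding Ord_MR_def by blast
      then show False using not_RRL[of \<gamma> R 0 "\<lambda>_. 0"] by (simp add: J_MR_RRL)
    next
      assume "?r \<in> Ord_RRL E0"
      then obtain R \<alpha> F \<gamma> where "0 \<le> \<gamma>" "\<gamma> < 1" "?r = induced_ord E0 (J_RRL E0 R \<alpha> F \<gamma>)"
        unfolding Ord_RRL_def by blast
      then show False using not_RRL[of \<gamma> R \<alpha> F] by simp
    qed
  qed
qed

end
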